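(* Let $\mathbb{K}$ be a field, $n>1$, $a=\sum_{j=0}^d c_j s^j\in\mathbb{K}[s]^n$ a non-zero row vector of degree $d$, and $A\in\mathbb{K}^{(2d+1)\times n(d+1)}$ the matrix whose $(i,\,kn+r)$ entry ($1\le i\le 2d+1$, $0\le k\le d$, $1\le r\le n$) is the $r$-th entry of $c_{i-1-k}$ (zero if $i-1-k\notin\{0,\dots,d\}$). With $\tilde q$ and $b_r$ as in the context, $\mathrm{syz}(a)=\langle b_r^\flat\mid r\in\tilde q\rangle_{\mathbb{K}[s]}$.
   Context: A column of a matrix is pivotal if it is either the first column and non-zero, or linearly independent of all previous columns; otherwise non-pivotal. $p$ is the set of pivotal indices of $A$, $q$ the set of non-pivotal indices, and $\tilde q=\{\min\varrho\mid\varrho\in q/(n)\}$ the set of basic non-pivotal indices (minimal elements of the classes of $q$ modulo $n$). For $i\in q$ write uniquely $A_{*i}=\sum_{\{j\in p\mid j<i\}}\alpha^{(i)}_jA_{*j}$ ($A_{*j}$ the $j$-th column) and set $b_i=e_i-\sum_{\{j\in p\mid j<i\}}\alpha^{(i)}_je_j\in\mathbb{K}^{n(d+1)}$, $e_i$ the standard basis vectors. For $v\in\mathbb{K}^{n(d+1)}$ in blocks $v=[w_0;\dots;w_d]$ with $w_i\in\mathbb{K}^n$, $v^\flat=\sum_{i=0}^d s^i w_i\in\mathbb{K}[s]^n$. $\mathrm{syz}(a)=\{h\in\mathbb{K}[s]^n\mid a\,h=0\}$. *)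

theory Defs
  imports "HOL-Computational_Algebra.Polynomial"
begin

text \<open>Conventions: a row vector in K[s]^n is a function nat => 'a poly whose entries
  at indices 0..n-1 are the components (indices are 0-based). Matrices are functions
  nat => nat => 'a (row, column), 0-based. Column index k*n + r (0 <= r < n) of the
  paper's matrix A (1-based: kn+r+1) corresponds to coefficient c_{i-k} of entry r.\<close>

definition vdegree :: "nat \<Rightarrow> (nat \<Rightarrow> 'a::zero poly) \<Rightarrow> nat" where
  "vdegree n a = Max ((\<lambda>r. degree (a r)) ` {..<n})"

text \<open>The matrix A (rows 0..2d, columns 0..n(d+1)-1); row i here is row i+1 of the paper.\<close>
definition coeff_mat :: "nat \<Rightarrow> nat \<Rightarrow> (nat \<Rightarrow> 'a::zero poly) \<Rightarrow> nat \<Rightarrow> nat \<Rightarrow> 'a" where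
  "coeff_mat n d a i m =
     (let k = m div n; r = m mod n in
      if k \<le> i \<and> i - k \<le> d then coeff (a r) (i - k) else 0)"

definition in_col_span :: "nat \<Rightarrow> (nat \<Rightarrow> nat \<Rightarrow> 'a::field) \<Rightarrow> nat set \<Rightarrow> nat \<Rightarrow> bool" where
  "in_col_span R M S j \<longleftrightarrow> (\<exists>\<beta>. \<forall>i<R. M i j = (\<Sum>l\<in>S. \<beta> l * M i l))"

text \<open>Pivotal column: linearly independent of all previous columns
  (for j = 0: nonzero, since the empty span is {0}).\<close>
definition pivotal :: "nat \<Rightarrow> (nat \<Rightarrow> nat \<Rightarrow> 'a::field) \<Rightarrow> nat \<Rightarrow> bool" where
  "pivotal R M j \<longleftrightarrow> \<not> in_col_span R M {..<j} j"

definition piv_set :: "nat \<Rightarrow> nat \<Rightarrow> (nat \<Rightarrow> nat \<Rightarrow> 'a::field) \<Rightarrow> nat set" where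
  "piv_set R N M = {j. j < N \<and> pivotal R M j}"

definition nonpiv_set :: "nat \<Rightarrow> nat \<Rightarrow> (nat \<Rightarrow> nat \<Rightarrow> 'a::field) \<Rightarrow> nat set" where
  "nonpiv_set R N M = {j. j < N \<and> \<not> pivotal R M j}"

definition basic_nonpiv :: "nat \<Rightarrow> nat set \<Rightarrow> nat set" where
  "basic_nonpiv n q = (\<lambda>i. Min {j \<in> q. j mod n = i mod n}) ` q"

definition alpha :: "nat \<Rightarrow> (nat \<Rightarrow> nat \<Rightarrow> 'a::field) \<Rightarrow> nat set \<Rightarrow> nat \<Rightarrow> nat \<Rightarrow> 'a" where
  "alpha R M p i = (THE \<beta>. (\<forall>i'<R. M i' i = (\<Sum>j\<in>{j\<in>p. j < i}. \<beta> j * M i' j))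
                        \<and> (\<forall>j. j \<notin> {j\<in>p. j < i} \<longrightarrow> \<beta> j = 0))"

definition bvec :: "nat \<Rightarrow> (nat \<Rightarrow> nat \<Rightarrow> 'a::field) \<Rightarrow> nat set \<Rightarrow> nat \<Rightarrow> nat \<Rightarrow> 'a" where
  "bvec R M p i = (\<lambda>m. (if m = i then 1 else 0)
                        - (\<Sum>j\<in>{j\<in>p. j < i}. alpha R M p i j * (if m = j then 1 else 0)))"

definition flat :: "nat \<Rightarrow> nat \<Rightarrow> (nat \<Rightarrow> 'a::comm_semiring_1) \<Rightarrow> nat \<Rightarrow> 'a poly" where
  "flat n d v = (\<lambda>r. if r < n then (\<Sum>k\<le>d. monom (v (k * n + r)) k) else 0)"

definition syz :: "nat \<Rightarrow> (nat \<Rightarrow> 'a::comm_ring_1 poly) \<Rightarrow> (nat \<Rightarrow> 'a poly) set" where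
  "syz n a = {h. (\<forall>r\<ge>n. h r = 0) \<and> (\<Sum>r<n. a r * h r) = 0}"

definition poly_span :: "'i set \<Rightarrow> ('i \<Rightarrow> nat \<Rightarrow> 'a::comm_ring_1 poly) \<Rightarrow> (nat \<Rightarrow> 'a poly) set" where
  "poly_span I g = {h. \<exists>f. h = (\<lambda>r. \<Sum>i\<in>I. f i * g i r)}"

end

theory Submission
  imports Defs
begin


definition spanset :: "nat \<Rightarrow> (nat \<Rightarrow> nat \<Rightarrow> 'a::field) \<Rightarrow> nat set \<Rightarrow> (nat \<Rightarrow> 'a) set" where
  "spanset R M S = {x. \<exists>\<beta>. \<forall>m<R. x m = (\<Sum>l\<in>S. \<beta> l * M m l)}"

lemma span_add: "x \<in> spanset R M S \<Longrightarrow> y \<in> spanset R M S \<Longrightarrow> (\<lambda>m. x m + y m) \<in> spanset R M S"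
proof -
  assume "x \<in> spanset R M S" "y \<in> spanset R M S"
  then obtain b1 b2 where "\<forall>m<R. x m = (\<Sum>l\<in>S. b1 l * M m l)" "\<forall>m<R. y m = (\<Sum>l\<in>S. b2 l * M m l)"
    unfolding spanset_def by auto
  then show ?thesis unfolding spanset_def
    by (intro CollectI exI[of _ "\<lambda>l. b1 l + b2 l"]) (simp add: distrib_right sum.distrib)
qed

lemma span_smult: "x \<in> spanset R M S \<Longrightarrow> (\<lambda>m. c * x m) \<in> spanset R M S"
proof -
  assume "x \<in> spanset R M S"
  then obtain b1 where "\<forall>m<R. x m = (\<Sum>l\<in>S. b1 l * M m l)"
    unfolding spanset_def by auto
  then show ?thesis unfolding spanset_def
    by (intro CollectI exI[of _ "\<lambda>l. c * b1 l"]) (simp add: sum_distrib_left mult.assoc)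
qed

lemma span_zero: "(\<lambda>m. 0) \<in> spanset R M S"
  unfolding spanset_def by (intro CollectI exI[of _ "\<lambda>l. 0"]) simp

lemma span_cong: "x \<in> spanset R M S \<Longrightarrow> \<forall>m<R. y m = x m \<Longrightarrow> y \<in> spanset R M S"
  unfolding spanset_def by auto

lemma span_col: "finite S \<Longrightarrow> l \<in> S \<Longrightarrow> (\<lambda>m. M m l) \<in> spanset R M S"
  unfolding spanset_def
proof (intro CollectI exI[of _ "\<lambda>l'. if l' = l then 1 else 0"] allI impI)
  fix m assume "finite S" "l \<in> S"
  have "(\<Sum>la\<in>S. (if la = l then 1 else 0) * M m la) = (\<Sum>la\<in>S. if la = l then M m la else 0)"
    by (intro sum.cong) auto
  then show "M m l = (\<Sum>la\<in>S. (if la = l then 1 else 0) * M m la)" using \<open>finite S\<close> \<open>l \<in> S\<close> by simp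
qed

lemma span_mono: "finite T \<Longrightarrow> S \<subseteq> T \<Longrightarrow> x \<in> spanset R M S \<Longrightarrow> x \<in> spanset R M T"
proof -
  assume fT: "finite T" and ST: "S \<subseteq> T" and "x \<in> spanset R M S"
  then obtain b1 where b1: "\<forall>m<R. x m = (\<Sum>l\<in>S. b1 l * M m l)"
    unfolding spanset_def by auto
  have "(\<Sum>l\<in>T. (if l \<in> S then b1 l else 0) * M m l) = (\<Sum>l\<in>S. b1 l * M m l)" for m
  proof -
    have "(\<Sum>l\<in>T. (if l \<in> S then b1 l else 0) * M m l) = (\<Sum>l\<in>T. (if l \<in> S then b1 l * M m l else 0))"
      by (intro sum.cong) auto
    also have "\<dots> = (\<Sum>l\<in>T \<inter> S. b1 l * M m l)" using fT by (simp add: sum.inter_restrict)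
    also have "T \<inter> S = S" using ST by auto
    finally show ?thesis .
  qed
  then show ?thesis using b1 unfolding spanset_def
    by (intro CollectI exI[of _ "\<lambda>l. if l \<in> S then b1 l else 0"]) simp
qed

lemma span_sum: "finite L \<Longrightarrow> (\<forall>l\<in>L. x l \<in> spanset R M S) \<Longrightarrow> (\<lambda>m. \<Sum>l\<in>L. c l * x l m) \<in> spanset R M S"
proof (induction L rule: finite_induct)
  case empty
  then show ?case using span_zero by simp
next
  case (insert l L)
  have "(\<lambda>m. c l * x l m + (\<Sum>l\<in>L. c l * x l m)) \<in> spanset R M S"
    using insert by (intro span_add span_smult) auto
  then show ?case using insert by simp
qed

lemma nonpiv_span:
  "\<not> pivotal R M i \<Longrightarrow> (\<lambda>m. M m i) \<in> spanset R M {j. pivotal R M j \<and> j < i}"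
proof (induction i rule: less_induct)
  case (less i)
  from less.prems obtain \<beta> where b: "\<forall>m<R. M m i = (\<Sum>l\<in>{..<i}. \<beta> l * M m l)"
    unfolding pivotal_def in_col_span_def by auto
  have "(\<lambda>m. M m l) \<in> spanset R M {j. pivotal R M j \<and> j < i}" if "l < i" for l
  proof (cases "pivotal R M l")
    case True
    then show ?thesis using that by (intro span_col) auto
  next
    case False
    then have ih: "(\<lambda>m. M m l) \<in> spanset R M {j. pivotal R M j \<and> j < l}" using less.IH that by auto
    have fin: "finite {j. pivotal R M j \<and> j < i}" by (rule finite_subset[of _ "{..<i}"]) auto
    have sub: "{j. pivotal R M j \<and> j < l} \<subseteq> {j. pivotal R M j \<and> j < i}" using that by auto
    show ?thesis by (rule span_mono[OF fin sub ih])
  qed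
  then have "(\<lambda>m. \<Sum>l\<in>{..<i}. \<beta> l * M m l) \<in> spanset R M {j. pivotal R M j \<and> j < i}"
    by (intro span_sum) auto
  then show ?case by (rule span_cong) (use b in auto)
qed

lemma piv_indep:
  assumes "finite S" "\<forall>j\<in>S. pivotal R M j" "\<forall>m<R. (\<Sum>j\<in>S. \<gamma> j * M m j) = 0"
  shows "\<forall>j\<in>S. \<gamma> j = 0"
proof (rule ccontr)
  assume H: "\<not> (\<forall>j\<in>S. \<gamma> j = 0)"
  define S' where "S' = {j\<in>S. \<gamma> j \<noteq> 0}"
  have fS': "finite S'" "S' \<noteq> {}" using assms(1) H unfolding S'_def by auto
  define J where "J = Max S'"
  have J: "J \<in> S'" "\<forall>j\<in>S'. j \<le> J" using fS' unfolding J_def by auto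
  have gJ: "\<gamma> J \<noteq> 0" using J unfolding S'_def by auto
  have "in_col_span R M {..<J} J"
    unfolding in_col_span_def
  proof (intro exI[of _ "\<lambda>l. if l \<in> S' - {J} then - \<gamma> l / \<gamma> J else 0"] allI impI)
    fix m assume m: "m < R"
    have "(\<Sum>j\<in>S. \<gamma> j * M m j) = (\<Sum>j\<in>S'. \<gamma> j * M m j)"
      unfolding S'_def using assms(1) by (intro sum.mono_neutral_right) auto
    also have "\<dots> = \<gamma> J * M m J + (\<Sum>j\<in>S' - {J}. \<gamma> j * M m j)"
      using J fS' by (simp add: sum.remove)
    finally have "\<gamma> J * M m J = - (\<Sum>j\<in>S' - {J}. \<gamma> j * M m j)" using assms(3) m
      by (simp add: eq_neg_iff_add_eq_0 add.commute)
    then have "M m J = (- (\<Sum>j\<in>S' - {J}. \<gamma> j * M m j)) / \<gamma> J"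
      using gJ by (simp add: field_simps)
    also have "\<dots> = (\<Sum>j\<in>S' - {J}. (- \<gamma> j / \<gamma> J) * M m j)"
      by (simp add: sum_divide_distrib flip: sum_negf)
    also have "\<dots> = (\<Sum>l\<in>{..<J} \<inter> (S' - {J}). (- \<gamma> l / \<gamma> J) * M m l)"
    proof -
      have "{..<J} \<inter> (S' - {J}) = S' - {J}" using J by force
      then show ?thesis by simp
    qed
    also have "\<dots> = (\<Sum>l\<in>{..<J}. (if l \<in> S' - {J} then (- \<gamma> l / \<gamma> J) * M m l else 0))"
      using sum.inter_restrict[of "{..<J}" "\<lambda>l. (- \<gamma> l / \<gamma> J) * M m l" "S' - {J}"] by (simp only: finite_lessThan)
    moreover have e: "\<And>l. (if l \<in> S' - {J} then - \<gamma> l / \<gamma> J else 0) * M m l = (if l \<in> S' - {J} then (- \<gamma> l / \<gamma> J) * M m l else 0)"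
      by simp
    ultimately show "M m J = (\<Sum>l\<in>{..<J}. (if l \<in> S' - {J} then - \<gamma> l / \<gamma> J else 0) * M m l)"
      unfolding e by simp
  qed
  then show False using assms(2) J unfolding S'_def pivotal_def by auto
qed

lemma alpha_prop:
  assumes Peq: "{j\<in>p. j<i} = {j. pivotal R M j \<and> j < i}" and np: "\<not> pivotal R M i"
  shows "\<forall>m<R. M m i = (\<Sum>j\<in>{j\<in>p. j<i}. alpha R M p i j * M m j)"
proof -
  define P where "P = {j\<in>p. j<i}"
  define Q where "Q = (\<lambda>\<beta>. (\<forall>i'<R. M i' i = (\<Sum>j\<in>P. \<beta> j * M i' j)) \<and> (\<forall>j. j \<notin> P \<longrightarrow> \<beta> (j::nat) = (0::'a)))"
  have fin: "finite P" unfolding P_def by (rule finite_subset[of _ "{..<i}"]) auto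
  have "(\<lambda>m. M m i) \<in> spanset R M P" using nonpiv_span[OF np] unfolding P_def Peq .
  then obtain \<beta> where b: "\<forall>m<R. M m i = (\<Sum>l\<in>P. \<beta> l * M m l)"
    unfolding spanset_def mem_Collect_eq by blast
  have ex: "Q (\<lambda>j. if j \<in> P then \<beta> j else 0)"
    unfolding Q_def
  proof (intro conjI allI impI)
    fix m assume "m < R"
    then show "M m i = (\<Sum>j\<in>P. (if j \<in> P then \<beta> j else 0) * M m j)"
      using b by simp
  qed simp
  have un: "\<beta>1 = \<beta>2" if "Q \<beta>1" "Q \<beta>2" for \<beta>1 \<beta>2
  proof (rule ext)
    fix j
    have q1: "\<forall>i'<R. M i' i = (\<Sum>j\<in>P. \<beta>1 j * M i' j)" and q2: "\<forall>i'<R. M i' i = (\<Sum>j\<in>P. \<beta>2 j * M i' j)"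
      using conjunct1[OF that(1)[unfolded Q_def]] conjunct1[OF that(2)[unfolded Q_def]] by auto
    have "\<forall>m<R. (\<Sum>j\<in>P. (\<beta>1 j - \<beta>2 j) * M m j) = 0"
    proof (intro allI impI)
      fix m assume m: "m < R"
      have e1: "M m i = (\<Sum>j\<in>P. \<beta>1 j * M m j)" using q1 m by blast
      have e2: "M m i = (\<Sum>j\<in>P. \<beta>2 j * M m j)" using q2 m by blast
      have "(\<Sum>j\<in>P. (\<beta>1 j - \<beta>2 j) * M m j) = (\<Sum>j\<in>P. \<beta>1 j * M m j) - (\<Sum>j\<in>P. \<beta>2 j * M m j)"
        by (simp only: left_diff_distrib sum_subtractf)
      also have "\<dots> = 0" by (simp only: e1[symmetric] e2[symmetric] diff_self)
      finally show "(\<Sum>j\<in>P. (\<beta>1 j - \<beta>2 j) * M m j) = 0" .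
    qed
    moreover have "\<forall>j\<in>P. pivotal R M j" using Peq unfolding P_def by blast
    ultimately have "\<forall>j\<in>P. \<beta>1 j - \<beta>2 j = 0"
      by (rule piv_indep[OF fin, rotated])
    moreover have "\<forall>j. j \<notin> P \<longrightarrow> \<beta>1 j = 0" "\<forall>j. j \<notin> P \<longrightarrow> \<beta>2 j = 0"
      using conjunct2[OF that(1)[unfolded Q_def]] conjunct2[OF that(2)[unfolded Q_def]] by auto
    ultimately show "\<beta>1 j = \<beta>2 j" by (cases "j \<in> P") auto
  qed
  have QT: "Q (THE \<beta>. Q \<beta>)"
    by (rule theI[of Q, OF ex]) (rule un[OF _ ex])
  have aeq: "alpha R M p i = (THE \<beta>. Q \<beta>)" unfolding alpha_def Q_def P_def ..
  have Qa: "Q (alpha R M p i)" unfolding aeq by (rule QT)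
  show ?thesis using conjunct1[OF Qa[unfolded Q_def]] unfolding P_def .
qed



lemma sum_blocks: "(\<Sum>c<n*(D::nat). f c) = (\<Sum>k<D. \<Sum>r<n. f (k*n+r))"
proof (induction D)
  case 0 then show ?case by simp
next
  case (Suc D)
  have "(\<Sum>c<n*Suc D. f c) = (\<Sum>c<n*D. f c) + (\<Sum>c\<in>{n*D..<n*D+n}. f c)"
    by (simp add: sum.atLeastLessThan_concat[symmetric] lessThan_atLeast0 add.commute)
  also have "(\<Sum>c\<in>{n*D..<n*D+n}. f c) = (\<Sum>r<n. f (D*n+r))"
  proof -
    have "{n*D..<n*D+n} = {0+D*n..<n+D*n}" by (simp add: mult.commute add.commute)
    then have "(\<Sum>c\<in>{n*D..<n*D+n}. f c) = (\<Sum>r\<in>{0..<n}. f (r + D*n))"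
      by (simp only: sum.shift_bounds_nat_ivl)
    then show ?thesis by (simp add: lessThan_atLeast0 add.commute)
  qed
  finally show ?case using Suc by simp
qed

definition vecp :: "nat \<Rightarrow> (nat \<Rightarrow> 'a::zero poly) \<Rightarrow> nat \<Rightarrow> 'a" where
  "vecp n h c = coeff (h (c mod n)) (c div n)"

lemma coeff_flat: "r < n \<Longrightarrow> coeff (flat n d u r) k = (if k \<le> d then u (k*n+r) else 0)"
  unfolding flat_def by (simp add: coeff_sum coeff_monom)

lemma key:
  fixes a :: "nat \<Rightarrow> 'a::field poly"
  assumes n: "n > 0" and deg: "\<forall>r<n. degree (a r) \<le> d"
  shows "(\<Sum>r<n. a r * flat n d u r) = (\<Sum>m\<le>2*d. monom (\<Sum>c<n*(d+1). coeff_mat n d a m c * u c) m)"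
proof (rule poly_eqI)
  fix m
  have L: "coeff (\<Sum>r<n. a r * flat n d u r) m
      = (\<Sum>r<n. \<Sum>k<Suc d. if k \<le> m then coeff (a r) (m-k) * u (k*n+r) else 0)"
  proof -
    have "coeff (a r * flat n d u r) m = (\<Sum>k<Suc d. if k \<le> m then coeff (a r) (m-k) * u (k*n+r) else 0)"
      if "r < n" for r
    proof -
      have "a r * flat n d u r = (\<Sum>k\<le>d. a r * monom (u (k*n+r)) k)"
        using that by (simp add: flat_def sum_distrib_left)
      moreover have "coeff (a r * monom (u (k*n+r)) k) m = (if k \<le> m then coeff (a r) (m-k) * u (k*n+r) else 0)" for k
        by (simp add: mult.commute[of "a r"] coeff_monom_mult)
      ultimately show ?thesis by (simp add: coeff_sum lessThan_Suc_atMost)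
    qed
    then show ?thesis by (simp add: coeff_sum)
  qed
  have R: "coeff (\<Sum>m\<le>2*d. monom (\<Sum>c<n*(d+1). coeff_mat n d a m c * u c) m) m
      = (if m \<le> 2*d then (\<Sum>c<n*(d+1). coeff_mat n d a m c * u c) else 0)"
    by (simp add: coeff_sum coeff_monom)
  have M: "coeff_mat n d a m (k*n+r) = (if k \<le> m \<and> m - k \<le> d then coeff (a r) (m-k) else 0)"
    if "r < n" for k r using that n unfolding coeff_mat_def by simp
  show "coeff (\<Sum>r<n. a r * flat n d u r) m = coeff (\<Sum>m\<le>2*d. monom (\<Sum>c<n*(d+1). coeff_mat n d a m c * u c) m) m"
  proof (cases "m \<le> 2*d")
    case True
    have "(\<Sum>c<n*(d+1). coeff_mat n d a m c * u c) = (\<Sum>k<Suc d. \<Sum>r<n. coeff_mat n d a m (k*n+r) * u (k*n+r))"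
      using sum_blocks[where n=n and D="Suc d" and f="\<lambda>c. coeff_mat n d a m c * u c"] by simp
    also have "\<dots> = (\<Sum>r<n. \<Sum>k<Suc d. coeff_mat n d a m (k*n+r) * u (k*n+r))"
      by (rule sum.swap)
    also have "\<dots> = (\<Sum>r<n. \<Sum>k<Suc d. if k \<le> m then coeff (a r) (m-k) * u (k*n+r) else 0)"
    proof (intro sum.cong refl)
      fix r k assume r: "r \<in> {..<n}" and k: "k \<in> {..<Suc d}"
      have "coeff (a r) (m-k) = 0" if "m - k > d" using that deg r
        by (intro coeff_eq_0) (auto)
      then show "coeff_mat n d a m (k*n+r) * u (k*n+r) = (if k \<le> m then coeff (a r) (m-k) * u (k*n+r) else 0)"
        using M[of r k] r by auto
    qed
    finally show ?thesis using L R True by simp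
  next
    case False
    have "coeff (a r) (m-k) = 0" if "r < n" "k < Suc d" for r k
      using that deg False by (intro coeff_eq_0) auto
    then show ?thesis using L R False by simp
  qed
qed



lemma pspan_add: "x \<in> poly_span I g \<Longrightarrow> y \<in> poly_span I g \<Longrightarrow> (\<lambda>r. x r + y r) \<in> poly_span I g"
proof -
  assume "x \<in> poly_span I g" "y \<in> poly_span I g"
  then obtain f1 f2 where "x = (\<lambda>r. \<Sum>i\<in>I. f1 i * g i r)" "y = (\<lambda>r. \<Sum>i\<in>I. f2 i * g i r)"
    unfolding poly_span_def by blast
  then show ?thesis unfolding poly_span_def
    by (intro CollectI exI[of _ "\<lambda>i. f1 i + f2 i"]) (simp add: distrib_right sum.distrib)
qed

lemma pspan_mult: "x \<in> poly_span I g \<Longrightarrow> (\<lambda>r. c * x r) \<in> poly_span I g"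
proof -
  assume "x \<in> poly_span I g"
  then obtain f1 where "x = (\<lambda>r. \<Sum>i\<in>I. f1 i * g i r)"
    unfolding poly_span_def by blast
  then show ?thesis unfolding poly_span_def
    by (intro CollectI exI[of _ "\<lambda>i. c * f1 i"]) (simp add: sum_distrib_left mult.assoc)
qed

lemma pspan_zero: "(\<lambda>r. 0) \<in> poly_span I g"
  unfolding poly_span_def by (intro CollectI exI[of _ "\<lambda>i. 0"]) simp

lemma pspan_gen: "finite I \<Longrightarrow> i \<in> I \<Longrightarrow> g i \<in> poly_span I g"
  unfolding poly_span_def
proof (intro CollectI exI[of _ "\<lambda>i'. if i' = i then 1 else 0"] ext)
  fix r assume "finite I" "i \<in> I"
  have "(\<Sum>i'\<in>I. (if i' = i then 1 else 0) * g i' r) = (\<Sum>i'\<in>I. if i' = i then g i' r else 0)"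
    by (intro sum.cong) auto
  then show "g i r = (\<Sum>i'\<in>I. (if i' = i then 1 else 0) * g i' r)" using \<open>finite I\<close> \<open>i \<in> I\<close> by simp
qed

lemma pspan_sum: "finite L \<Longrightarrow> (\<forall>l\<in>L. x l \<in> poly_span I g) \<Longrightarrow> (\<lambda>r. \<Sum>l\<in>L. c l * x l r) \<in> poly_span I g"
proof (induction L rule: finite_induct)
  case empty
  then show ?case using pspan_zero by simp
next
  case (insert l L)
  have "(\<lambda>r. c l * x l r + (\<Sum>l\<in>L. c l * x l r)) \<in> poly_span I g"
    using insert by (intro pspan_add pspan_mult) auto
  then show ?case using insert by simp
qed

lemma pspan_syz:
  assumes "finite I" "\<forall>i\<in>I. g i \<in> syz n a"
  shows "poly_span I g \<subseteq> syz n a"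
proof
  fix h assume "h \<in> poly_span I g"
  then obtain f where h: "h = (\<lambda>r. \<Sum>i\<in>I. f i * g i r)" unfolding poly_span_def by blast
  have "h r = 0" if "r \<ge> n" for r using assms that unfolding h syz_def by simp
  moreover have "(\<Sum>r<n. a r * h r) = 0"
  proof -
    have "(\<Sum>r<n. a r * h r) = (\<Sum>i\<in>I. f i * (\<Sum>r<n. a r * g i r))"
      unfolding h by (simp add: sum_distrib_left sum.swap[of _ I] mult.left_commute)
    also have "\<dots> = 0" using assms unfolding syz_def by simp
    finally show ?thesis .
  qed
  ultimately show "h \<in> syz n a" unfolding syz_def by simp
qed



context
  fixes a :: "nat \<Rightarrow> 'a::field poly" and n d :: nat
  assumes n1: "n > 1" and az: "\<forall>r\<ge>n. a r = 0" and dd: "d = vdegree n a"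
begin

lemma n0: "n > 0" using n1 by simp

lemma degA: "degree (a r) \<le> d"
proof (cases "r < n")
  case True
  then show ?thesis unfolding dd vdegree_def by (intro Max_ge) auto
next
  case False
  then show ?thesis using az by simp
qed

lemma ker_iff: "(\<Sum>r<n. a r * flat n d u r) = 0 \<longleftrightarrow>
   (\<forall>m<2*d+1. (\<Sum>c<n*(d+1). coeff_mat n d a m c * u c) = 0)"
proof -
  have k: "(\<Sum>r<n. a r * flat n d u r) = (\<Sum>m\<le>2*d. monom (\<Sum>c<n*(d+1). coeff_mat n d a m c * u c) m)"
    by (rule key[OF n0]) (use degA in auto)
  show ?thesis
  proof
    assume "(\<Sum>r<n. a r * flat n d u r) = 0"
    then have z: "coeff (\<Sum>m\<le>2*d. monom (\<Sum>c<n*(d+1). coeff_mat n d a m c * u c) m) m' = 0" for m'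
      using k by simp
    show "\<forall>m<2*d+1. (\<Sum>c<n*(d+1). coeff_mat n d a m c * u c) = 0"
    proof (intro allI impI)
      fix m assume "m < 2*d+1"
      then have "coeff (\<Sum>m\<le>2*d. monom (\<Sum>c<n*(d+1). coeff_mat n d a m c * u c) m) m = (\<Sum>c<n*(d+1). coeff_mat n d a m c * u c)"
        by (intro coeff_sum_monom) simp
      then show "(\<Sum>c<n*(d+1). coeff_mat n d a m c * u c) = 0"
        using z[of m] by simp
    qed
  next
    assume "\<forall>m<2*d+1. (\<Sum>c<n*(d+1). coeff_mat n d a m c * u c) = 0"
    then show "(\<Sum>r<n. a r * flat n d u r) = 0" unfolding k by (intro sum.neutral) auto
  qed
qed

lemma flat_vec:
  assumes "\<forall>r\<ge>n. h r = 0" "\<forall>c\<ge>n*(d+1). vecp n h c = 0"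
  shows "flat n d (vecp n h) = h"
proof
  fix r show "flat n d (vecp n h) r = h r"
  proof (cases "r < n")
    case False then show ?thesis using assms unfolding flat_def by simp
  next
    case True
    show ?thesis
    proof (rule poly_eqI)
      fix k
      have v: "vecp n h (k*n+r) = coeff (h r) k" unfolding vecp_def using True by simp
      show "coeff (flat n d (vecp n h) r) k = coeff (h r) k"
      proof (cases "k \<le> d")
        case True
        then show ?thesis using coeff_flat[OF \<open>r<n\<close>, where d=d and u="vecp n h" and k=k] v by simp
      next
        case False
        then have "k*n+r \<ge> n*(d+1)" using n0
          by (metis Suc_eq_plus1 le_add1 mult.commute mult_le_mono1 not_less_eq_eq order_trans)
        then show ?thesis using coeff_flat[OF \<open>r<n\<close>, where d=d and u="vecp n h" and k=k] v False assms by simp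
      qed
    qed
  qed
qed


abbreviation "MM \<equiv> coeff_mat n d a"
abbreviation "RR \<equiv> 2*d+1"
abbreviation "NN \<equiv> n*(d+1)"
abbreviation "pp \<equiv> piv_set RR NN MM"
abbreviation "qq \<equiv> nonpiv_set RR NN MM"
abbreviation "qt \<equiv> basic_nonpiv n qq"
abbreviation "GG \<equiv> (\<lambda>i. flat n d (bvec RR MM pp i))"

lemma q_props: "i \<in> qq \<Longrightarrow> i < NN \<and> \<not> pivotal RR MM i"
  unfolding nonpiv_set_def by simp

lemma Peq: "i < NN \<Longrightarrow> {j\<in>pp. j<i} = {j. pivotal RR MM j \<and> j<i}"
  unfolding piv_set_def by auto

lemma bvec_ker:
  assumes i: "i \<in> qq"
  shows "\<forall>m<RR. (\<Sum>c<NN. MM m c * bvec RR MM pp i c) = 0"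
proof (intro allI impI)
  fix m assume m: "m < RR"
  define P where "P = {j\<in>pp. j<i}"
  have iN: "i < NN" and np: "\<not> pivotal RR MM i" using q_props[OF i] by auto
  have al: "MM m i = (\<Sum>j\<in>P. alpha RR MM pp i j * MM m j)"
    using alpha_prop[OF Peq[OF iN] np] m unfolding P_def by blast
  have PN: "P \<subseteq> {..<NN}" unfolding P_def using iN by auto
  have finP: "finite P" using PN finite_subset by blast
  have "(\<Sum>c<NN. MM m c * bvec RR MM pp i c)
      = (\<Sum>c<NN. (if c = i then MM m c else 0) - (\<Sum>j\<in>P. alpha RR MM pp i j * (if c = j then MM m c else 0)))"
  proof (intro sum.cong refl)
    fix c
    show "MM m c * bvec RR MM pp i c = (if c = i then MM m c else 0) - (\<Sum>j\<in>P. alpha RR MM pp i j * (if c = j then MM m c else 0))"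
      unfolding bvec_def P_def[symmetric] right_diff_distrib sum_distrib_left
      by (intro arg_cong2[where f="(-)"] sum.cong refl) auto
  qed
  also have "\<dots> = MM m i - (\<Sum>c<NN. \<Sum>j\<in>P. alpha RR MM pp i j * (if c = j then MM m c else 0))"
    using iN by (simp add: sum_subtractf)
  also have "(\<Sum>c<NN. \<Sum>j\<in>P. alpha RR MM pp i j * (if c = j then MM m c else 0))
      = (\<Sum>j\<in>P. alpha RR MM pp i j * (\<Sum>c<NN. if c = j then MM m c else 0))"
    by (subst sum.swap) (simp only: sum_distrib_left)
  also have "\<dots> = (\<Sum>j\<in>P. alpha RR MM pp i j * MM m j)"
    by (intro sum.cong refl) (use PN in auto)
  finally show "(\<Sum>c<NN. MM m c * bvec RR MM pp i c) = 0" using al by simp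
qed

lemma G_syz: "i \<in> qq \<Longrightarrow> GG i \<in> syz n a"
  unfolding syz_def using ker_iff bvec_ker by (simp add: flat_def)

lemma bvec_self: "i \<notin> pp \<Longrightarrow> bvec RR MM pp i i = 1"
  unfolding bvec_def by simp

lemma bvec_gt: "c > i \<Longrightarrow> bvec RR MM pp i c = 0"
  unfolding bvec_def by simp

lemma qt_sub: "qt \<subseteq> qq"
proof
  fix x assume "x \<in> qt"
  then obtain i where i: "i \<in> qq" "x = Min {j \<in> qq. j mod n = i mod n}" unfolding basic_nonpiv_def by auto
  have "finite {j \<in> qq. j mod n = i mod n}" by (rule finite_subset[of _ "{..<NN}"]) (auto simp: nonpiv_set_def)
  moreover have "i \<in> {j \<in> qq. j mod n = i mod n}" using i by simp
  ultimately have "x \<in> {j \<in> qq. j mod n = i mod n}" using i Min_in by blast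
  then show "x \<in> qq" by simp
qed

lemma fin_qt: "finite qt"
  by (rule finite_subset[OF qt_sub]) (rule finite_subset[of _ "{..<NN}"], auto simp: nonpiv_set_def)

lemma qt_min: "B \<in> qq \<Longrightarrow> \<exists>r\<in>qt. r \<le> B \<and> r mod n = B mod n"
proof -
  assume B: "B \<in> qq"
  define x where "x = Min {j \<in> qq. j mod n = B mod n}"
  have "finite {j \<in> qq. j mod n = B mod n}" by (rule finite_subset[of _ "{..<NN}"]) (auto simp: nonpiv_set_def)
  moreover have "B \<in> {j \<in> qq. j mod n = B mod n}" using B by simp
  ultimately have "x \<in> {j \<in> qq. j mod n = B mod n}" "x \<le> B" unfolding x_def using Min_in Min_le by blast+
  moreover have "x \<in> qt" unfolding basic_nonpiv_def x_def using B by blast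
  ultimately show ?thesis by auto
qed


lemma disj_pq: "x \<in> qq \<Longrightarrow> x \<notin> pp"
  unfolding nonpiv_set_def piv_set_def by simp

lemma main_ind:
  "\<forall>h. (\<forall>r\<ge>n. h r = 0) \<longrightarrow> (\<Sum>r<n. a r * h r) = 0 \<longrightarrow> (\<forall>c. B \<le> c \<or> NN \<le> c \<longrightarrow> vecp n h c = 0)
     \<longrightarrow> h \<in> poly_span qt GG"
proof (induction B)
  case 0
  show ?case
  proof (intro allI impI)
    fix h :: "nat \<Rightarrow> 'a poly"
    assume h1: "\<forall>r\<ge>n. h r = 0" and h3: "\<forall>c. 0 \<le> c \<or> NN \<le> c \<longrightarrow> vecp n h c = 0"
    have "flat n d (vecp n h) = h" by (rule flat_vec) (use h1 h3 in auto)
    then have "h = flat n d (vecp n h)" by simp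
    also have "\<dots> = (\<lambda>r. 0)" using h3 unfolding flat_def by (intro ext) simp
    finally show "h \<in> poly_span qt GG" using pspan_zero by simp
  qed
next
  case (Suc B)
  show ?case
  proof (intro allI impI)
    fix h :: "nat \<Rightarrow> 'a poly"
    assume h1: "\<forall>r\<ge>n. h r = 0" and h2: "(\<Sum>r<n. a r * h r) = 0"
      and h3: "\<forall>c. Suc B \<le> c \<or> NN \<le> c \<longrightarrow> vecp n h c = 0"
    define v where "v = vecp n h"
    show "h \<in> poly_span qt GG"
    proof (cases "v B = 0")
      case True
      then have "\<forall>c. B \<le> c \<or> NN \<le> c \<longrightarrow> vecp n h c = 0" using h3 unfolding v_def
        by (metis Suc_leI le_neq_implies_less)
      then show ?thesis using Suc.IH h1 h2 by blast
    next
      case False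
      have BN: "B < NN" using False h3 unfolding v_def by (meson not_le)
      have hf: "flat n d v = h" unfolding v_def by (rule flat_vec) (use h1 h3 in auto)
      have ker: "\<forall>m<RR. (\<Sum>c<NN. MM m c * v c) = 0" using ker_iff[of v] h2 hf by simp
      have "in_col_span RR MM {..<B} B"
        unfolding in_col_span_def
      proof (intro exI[of _ "\<lambda>c. - v c / v B"] allI impI)
        fix m assume m: "m < RR"
        have "(\<Sum>c<NN. MM m c * v c) = (\<Sum>c<Suc B. MM m c * v c)"
          using BN h3 unfolding v_def by (intro sum.mono_neutral_right) auto
        also have "\<dots> = (\<Sum>c<B. MM m c * v c) + MM m B * v B" by simp
        finally have "MM m B * v B = - (\<Sum>c<B. MM m c * v c)" using ker m
          by (simp add: eq_neg_iff_add_eq_0 add.commute)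
        then have "MM m B = - (\<Sum>c<B. MM m c * v c) / v B" using False by (simp add: field_simps)
        also have "\<dots> = (\<Sum>c<B. (- v c / v B) * MM m c)"
          by (simp add: sum_divide_distrib mult.commute flip: sum_negf)
        finally show "MM m B = (\<Sum>c<B. (- v c / v B) * MM m c)" .
      qed
      then have Bq: "B \<in> qq" using BN unfolding nonpiv_set_def pivotal_def by simp
      obtain rt where rt: "rt \<in> qt" "rt \<le> B" "rt mod n = B mod n" using qt_min[OF Bq] by blast
      have rtq: "rt \<in> qq" using rt qt_sub by blast
      have rtp: "rt \<notin> pp" using disj_pq[OF rtq] .
      define t where "t = B div n - rt div n"
      have Bdiv: "B div n * n + B mod n = B" by simp
      have rdiv: "rt div n * n + rt mod n = rt" by simp
      have rle: "rt div n \<le> B div n" using rt(2) by (rule div_le_mono)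
      have tn: "t * n = B div n * n - rt div n * n" unfolding t_def by (simp add: diff_mult_distrib)
      have Beq: "B = rt + t*n"
      proof -
        have "rt div n * n \<le> B div n * n" using rle by simp
        then show ?thesis using Bdiv rdiv tn rt(3) by linarith
      qed
      define g where "g = GG rt"
      define h' where "h' = (\<lambda>r. h r - monom (v B) t * g r)"
      have g0: "g r = 0" if "r \<ge> n" for r using that unfolding g_def flat_def by simp
      have gsyz: "(\<Sum>r<n. a r * g r) = 0" using G_syz[OF rtq] unfolding g_def syz_def by simp
      have h'1: "\<forall>r\<ge>n. h' r = 0" using h1 g0 unfolding h'_def by simp
      have h'2: "(\<Sum>r<n. a r * h' r) = 0"
      proof -
        have "(\<Sum>r<n. a r * h' r) = (\<Sum>r<n. a r * h r) - monom (v B) t * (\<Sum>r<n. a r * g r)"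
          unfolding h'_def by (simp add: right_diff_distrib sum_subtractf sum_distrib_left mult.left_commute)
        then show ?thesis using h2 gsyz by simp
      qed
      have h'3: "\<forall>c. B \<le> c \<or> NN \<le> c \<longrightarrow> vecp n h' c = 0"
      proof (intro allI impI)
        fix c assume c: "B \<le> c \<or> NN \<le> c"
        then have cB: "B \<le> c" using BN by linarith
        have cdiv: "B div n \<le> c div n" using cB by (rule div_le_mono)
        have tc: "t \<le> c div n" using cdiv unfolding t_def by linarith
        have cm: "c mod n < n" using n0 by simp
        have e: "(c div n - t) * n + c mod n = c - t*n"
        proof -
          have "c div n * n + c mod n = c" by simp
          moreover have "(c div n - t) * n = c div n * n - t * n" by (simp add: diff_mult_distrib)
          moreover have "t * n \<le> c div n * n" using tc by simp
          ultimately show ?thesis by linarith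
        qed
        have vh': "vecp n h' c = v c - v B * coeff (g (c mod n)) (c div n - t)"
          unfolding h'_def vecp_def v_def using tc by (simp add: coeff_monom_mult)
        have cg: "coeff (g (c mod n)) (c div n - t) = (if c div n - t \<le> d then bvec RR MM pp rt (c - t*n) else 0)"
          unfolding g_def using coeff_flat[OF cm, where d=d and u="bvec RR MM pp rt" and k="c div n - t"] e by simp
        show "vecp n h' c = 0"
        proof (cases "c = B")
          case True
          have "B div n \<le> d"
          proof -
            have "B div n < d + 1" using BN n0 by (simp add: div_less_iff_less_mult mult.commute)
            then show ?thesis by simp
          qed
          then have "c div n - t \<le> d" using True by simp
          moreover have "c - t*n = rt" using True Beq by simp
          ultimately show ?thesis using vh' cg bvec_self[OF rtp] True unfolding v_def by simp
        next
          case False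
          then have "Suc B \<le> c" using cB by simp
          then have "v c = 0" using h3 unfolding v_def by blast
          moreover have "c - t*n > rt" using False cB Beq by linarith
          ultimately show ?thesis using vh' cg bvec_gt by simp
        qed
      qed
      have "h' \<in> poly_span qt GG" using Suc.IH h'1 h'2 h'3 by blast
      moreover have "g \<in> poly_span qt GG" unfolding g_def by (rule pspan_gen[OF fin_qt rt(1)])
      ultimately have "(\<lambda>r. h' r + monom (v B) t * g r) \<in> poly_span qt GG"
        by (intro pspan_add pspan_mult)
      moreover have "(\<lambda>r. h' r + monom (v B) t * g r) = h" unfolding h'_def by simp
      ultimately show ?thesis by simp
    qed
  qed
qed


lemma deg_syz_span:
  assumes "h \<in> syz n a" "\<forall>r. degree (h r) \<le> d"
  shows "h \<in> poly_span qt GG"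
proof -
  have "\<forall>c. NN \<le> c \<or> NN \<le> c \<longrightarrow> vecp n h c = 0"
  proof (intro allI impI)
    fix c assume "NN \<le> c \<or> NN \<le> c"
    then have "d + 1 \<le> c div n" using n0 by (simp add: less_eq_div_iff_mult_less_eq mult.commute)
    then have "degree (h (c mod n)) < c div n" using spec[OF assms(2), of "c mod n"] by linarith
    then show "vecp n h c = 0" unfolding vecp_def by (simp add: coeff_eq_0)
  qed
  moreover have "\<forall>r\<ge>n. h r = 0" "(\<Sum>r<n. a r * h r) = 0" using assms(1) unfolding syz_def by auto
  ultimately show ?thesis using main_ind[of NN] by simp
qed

lemma syz_span:
  assumes anz: "\<exists>r<n. a r \<noteq> 0" and hs: "h \<in> syz n a"
  shows "h \<in> poly_span qt GG"
proof -
  obtain t where t: "t < n" "a t \<noteq> 0" "degree (a t) = d"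
  proof (cases "d = 0")
    case True
    obtain r where "r < n" "a r \<noteq> 0" using anz by blast
    moreover have "degree (a r) = d" using degA[of r] True by simp
    ultimately show ?thesis using that by blast
  next
    case False
    have "d \<in> (\<lambda>r. degree (a r)) ` {..<n}" unfolding dd vdegree_def using n0
      by (intro Max_in) auto
    then obtain r where "r < n" "degree (a r) = d" by auto
    moreover have "a r \<noteq> 0" using False \<open>degree (a r) = d\<close> by auto
    ultimately show ?thesis using that by blast
  qed
  define \<kappa> where "\<kappa> = (\<lambda>i r. (if r = i then a t else 0) - (if r = t then a i else 0))"
  have \<kappa>span: "\<kappa> i \<in> poly_span qt GG" if i: "i < n" for i
  proof (rule deg_syz_span)
    have "(\<Sum>r<n. a r * \<kappa> i r) = (\<Sum>r<n. if r = i then a r * a t else 0) - (\<Sum>r<n. if r = t then a r * a i else 0)"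
      unfolding \<kappa>_def by (simp add: right_diff_distrib sum_subtractf if_distrib[of "\<lambda>x. a _ * x"] cong: if_cong)
    also have "\<dots> = 0" using i t by (simp add: mult.commute)
    finally show "\<kappa> i \<in> syz n a" unfolding syz_def \<kappa>_def using i t by auto
    show "\<forall>r. degree (\<kappa> i r) \<le> d" unfolding \<kappa>_def
      by (intro allI degree_diff_le) (auto simp: degA)
  qed
  define h' where "h' = (\<lambda>r. h r - (\<Sum>i<n. (h i div a t) * \<kappa> i r))"
  have h0: "h r = 0" if "r \<ge> n" for r using hs that unfolding syz_def by simp
  have h'0: "h' r = 0" if "r \<ge> n" for r using that t h0 unfolding h'_def \<kappa>_def by simp
  have h'sum: "(\<Sum>r<n. a r * h' r) = 0"
  proof -
    have k0: "(\<Sum>r<n. a r * \<kappa> i r) = 0" if "i < n" for i using \<kappa>span[OF that]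
      using that t unfolding \<kappa>_def by (simp add: right_diff_distrib sum_subtractf if_distrib[of "\<lambda>x. a _ * x"] mult.commute cong: if_cong)
    have e1: "(\<Sum>r<n. a r * h' r) = (\<Sum>r<n. a r * h r) - (\<Sum>r<n. \<Sum>i<n. a r * ((h i div a t) * \<kappa> i r))"
      unfolding h'_def by (simp only: right_diff_distrib sum_subtractf sum_distrib_left)
    have "(\<Sum>r<n. \<Sum>i<n. a r * ((h i div a t) * \<kappa> i r)) = (\<Sum>i<n. \<Sum>r<n. a r * ((h i div a t) * \<kappa> i r))"
      by (rule sum.swap)
    also have "\<dots> = (\<Sum>i<n. (h i div a t) * (\<Sum>r<n. a r * \<kappa> i r))"
      by (simp only: sum_distrib_left mult.left_commute)
    also have "\<dots> = 0" using k0 by simp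
    finally have e2: "(\<Sum>r<n. \<Sum>i<n. a r * ((h i div a t) * \<kappa> i r)) = 0" .
    have "(\<Sum>r<n. a r * h r) = 0" using hs unfolding syz_def by simp
    then show ?thesis using e1 e2 by simp
  qed
  have h'mod: "h' r = h r mod a t" if "r < n" "r \<noteq> t" for r
  proof -
    have "(\<Sum>i<n. (h i div a t) * \<kappa> i r) = (\<Sum>i<n. if i = r then (h r div a t) * a t else 0)"
      unfolding \<kappa>_def using that by (intro sum.cong) auto
    also have "\<dots> = (h r div a t) * a t" using that by simp
    finally show ?thesis unfolding h'_def by (simp add: minus_div_mult_eq_mod)
  qed
  have degr: "degree (h' r) \<le> d" if "r \<noteq> t" for r
  proof (cases "r < n")
    case True
    have "h r mod a t = 0 \<or> degree (h r mod a t) < degree (a t)" using degree_mod_less[OF t(2)] by blast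
    then show ?thesis using h'mod[OF True that] t by auto
  next
    case False then show ?thesis using h'0 by simp
  qed
  have degt: "degree (h' t) \<le> d"
  proof (cases "h' t = 0")
    case True then show ?thesis by simp
  next
    case False
    have "(\<Sum>r<n. a r * h' r) = a t * h' t + (\<Sum>r\<in>{..<n} - {t}. a r * h' r)"
      using t by (simp add: sum.remove)
    then have "a t * h' t = - (\<Sum>r\<in>{..<n} - {t}. a r * h' r)" using h'sum
      by (simp add: eq_neg_iff_add_eq_0)
    moreover have "degree (\<Sum>r\<in>{..<n} - {t}. a r * h' r) \<le> d + d"
    proof (rule degree_sum_le)
      fix r assume "r \<in> {..<n} - {t}"
      then have "degree (h' r) \<le> d" using degr by simp
      then show "degree (a r * h' r) \<le> d + d" using degA[of r] degree_mult_le[of "a r" "h' r"] by linarith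
    qed simp
    ultimately have "degree (a t * h' t) \<le> d + d" by simp
    then show ?thesis using degree_mult_eq[OF t(2) False] t(3) by simp
  qed
  have "h' \<in> poly_span qt GG"
  proof (rule deg_syz_span)
    show "h' \<in> syz n a" unfolding syz_def using h'0 h'sum by simp
    show "\<forall>r. degree (h' r) \<le> d" using degr degt by metis
  qed
  moreover have "(\<lambda>r. \<Sum>i<n. (h i div a t) * \<kappa> i r) \<in> poly_span qt GG"
    by (intro pspan_sum) (use \<kappa>span in auto)
  ultimately have "(\<lambda>r. h' r + (\<Sum>i<n. (h i div a t) * \<kappa> i r)) \<in> poly_span qt GG"
    by (rule pspan_add)
  moreover have "(\<lambda>r. h' r + (\<Sum>i<n. (h i div a t) * \<kappa> i r)) = h" unfolding h'_def by simp
  ultimately show ?thesis by simp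
qed

lemma final:
  assumes "\<exists>r<n. a r \<noteq> 0"
  shows "syz n a = poly_span qt GG"
proof
  show "syz n a \<subseteq> poly_span qt GG" using syz_span[OF assms] by blast
  show "poly_span qt GG \<subseteq> syz n a"
    by (rule pspan_syz[OF fin_qt]) (use qt_sub G_syz in blast)
qed

end

theorem lemma9:
  fixes a :: "nat \<Rightarrow> 'a::field poly" and n d :: nat
  assumes "n > 1"
    and "\<forall>r\<ge>n. a r = 0"
    and "\<exists>r<n. a r \<noteq> 0"
    and "d = vdegree n a"
  shows "syz n a =
    poly_span
      (basic_nonpiv n (nonpiv_set (2*d+1) (n*(d+1)) (coeff_mat n d a)))
      (\<lambda>i. flat n d (bvec (2*d+1) (coeff_mat n d a)
                       (piv_set (2*d+1) (n*(d+1)) (coeff_mat n d a)) i))"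
  by (rule final[OF assms(1,2,4,3)])

end
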